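(* Under the hypotheses of the two preceding theorems (discrepancy principle with fixed $1<\underline\tau\le\overline\tau<\infty$, $\varphi^\dagger$ satisfying the VSC with $\sigma\in(0,1]$ and a concave increasing index function $\Psi$), $$D^{\mathrm{sym}}_J(\varphi^\delta_{\alpha(\delta,f^\delta)},\varphi^\dagger)=\mathcal O(\Psi(\delta))\quad\text{as }\delta\to0.$$
   Context: $\mathcal V$ Banach, $\mathcal H$ Hilbert, $\mathcal T:\mathcal V\to\mathcal H$ bounded linear injective compact; $J:\mathcal V\to[0,\infty)$ convex; Bregman distance $D_J(u,u^* )=J(u)-J(u^* )-\langle p,u-u^*\rangle$ for $p\in\partial J(u^* )$, and symmetric Bregman distance $D_J^{\mathrm{sym}}(u,u^* )=D_J(u,u^* )+D_J(u^*,u)$; here $D_J(\varphi^\dagger,\varphi^\delta_\alpha)$ uses the subgradient $\frac1\alpha\mathcal T^*(f^\delta-\mathcal T\varphi^\delta_\alpha)\in\partial J(\varphi^\delta_\alpha)$. Noise level $\delta>0$, $\|f^\dagger-f^\delta\|\le\delta$; $\varphi^\delta_\alpha$ minimizes $\frac12\|\mathcal T\varphi-f^\delta\|^2+\alpha J(\varphi)$; $\varphi^\dagger$ is a $J$-minimizing solution of $\mathcal T\varphi=f^\dagger$. Discrepancy principle: $\underline\tau\delta\le\|\mathcal T\varphi^\delta_{\alpha(\delta,f^\delta)}-f^\delta\|\le\overline\tau\delta$. VSC: there exist $\sigma\in(0,1]$ and a concave index function $\Psi$ (continuous, increasing, $\Psi(0)=0$) with $\frac\sigma2D_J(\varphi,\varphi^\dagger)\le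 J(\varphi)-J(\varphi^\dagger)+\Psi(\|\mathcal T\varphi-\mathcal T\varphi^\dagger\|)$ for all $\varphi$. *)

theory Defs
  imports "HOL-Analysis.Analysis"
begin

definition compact_operator :: "('v::real_normed_vector \<Rightarrow> 'h::real_normed_vector) \<Rightarrow> bool" where
  "compact_operator T \<longleftrightarrow> bounded_linear T \<and> compact (closure (T ` cball 0 1))"

definition subdiff :: "('v::real_normed_vector \<Rightarrow> real) \<Rightarrow> 'v \<Rightarrow> ('v \<Rightarrow> real) set" where
  "subdiff J u = {p. bounded_linear p \<and> (\<forall>v. J u + p (v - u) \<le> J v)}"

definition bregman :: "('v::real_normed_vector \<Rightarrow> real) \<Rightarrow> ('v \<Rightarrow> real) \<Rightarrow> 'v \<Rightarrow> 'v \<Rightarrow> real" where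
  "bregman J p u u' = J u - J u' - p (u - u')"

definition bregman_sym :: "('v::real_normed_vector \<Rightarrow> real) \<Rightarrow> ('v \<Rightarrow> real) \<Rightarrow> ('v \<Rightarrow> real) \<Rightarrow> 'v \<Rightarrow> 'v \<Rightarrow> real" where
  "bregman_sym J p q u v = bregman J q u v + bregman J p v u"

definition tikhonov_minimizer ::
  "('v \<Rightarrow> 'h::real_normed_vector) \<Rightarrow> ('v \<Rightarrow> real) \<Rightarrow> 'h \<Rightarrow> real \<Rightarrow> 'v \<Rightarrow> bool" where
  "tikhonov_minimizer T J f \<alpha> \<phi> \<longleftrightarrow>
     (\<forall>\<psi>. (norm (T \<phi> - f))\<^sup>2 / 2 + \<alpha> * J \<phi> \<le> (norm (T \<psi> - f))\<^sup>2 / 2 + \<alpha> * J \<psi>)"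

definition J_min_solution :: "('v \<Rightarrow> 'h) \<Rightarrow> ('v \<Rightarrow> real) \<Rightarrow> 'h \<Rightarrow> 'v \<Rightarrow> bool" where
  "J_min_solution T J f \<phi> \<longleftrightarrow> T \<phi> = f \<and> (\<forall>\<psi>. T \<psi> = f \<longrightarrow> J \<phi> \<le> J \<psi>)"

definition concave_index_function :: "(real \<Rightarrow> real) \<Rightarrow> bool" where
  "concave_index_function \<Psi> \<longleftrightarrow> continuous_on {0..} \<Psi> \<and> strict_mono_on {0..} \<Psi> \<and>
     \<Psi> 0 = 0 \<and> concave_on {0..} \<Psi>"

end

theory Submission
  imports Defs
begin

theorem mainTheorem9:
  fixes T :: "'v::banach \<Rightarrow> 'h::{real_inner,complete_space}"
    and J :: "'v \<Rightarrow> real"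
    and f_dag :: 'h and phi_dag :: 'v and p_dag :: "'v \<Rightarrow> real"
    and \<sigma> \<tau>_lo \<tau>_up :: real and \<Psi> :: "real \<Rightarrow> real"
  assumes T_lin: "bounded_linear T" and T_inj: "inj T" and T_cpt: "compact_operator T"
    and J_nonneg: "\<And>\<phi>. J \<phi> \<ge> 0" and J_convex: "convex_on UNIV J"
    and sol: "J_min_solution T J f_dag phi_dag"
    and p_dag: "p_dag \<in> subdiff J phi_dag"
    and \<sigma>: "0 < \<sigma>" "\<sigma> \<le> 1"
    and \<Psi>: "concave_index_function \<Psi>"
    and VSC: "\<And>\<phi>. \<sigma> / 2 * bregman J p_dag \<phi> phi_dag
                 \<le> J \<phi> - J phi_dag + \<Psi> (norm (T \<phi> - T phi_dag))"
    and \<tau>: "1 < \<tau>_lo" "\<tau>_lo \<le> \<tau>_up"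
  shows "\<exists>C \<delta>\<^sub>0. \<delta>\<^sub>0 > 0 \<and>
    (\<forall>\<delta> f \<alpha> \<phi>. 0 < \<delta> \<longrightarrow> \<delta> \<le> \<delta>\<^sub>0 \<longrightarrow> norm (f_dag - f) \<le> \<delta> \<longrightarrow> 0 < \<alpha> \<longrightarrow>
       tikhonov_minimizer T J f \<alpha> \<phi> \<longrightarrow>
       \<tau>_lo * \<delta> \<le> norm (T \<phi> - f) \<longrightarrow> norm (T \<phi> - f) \<le> \<tau>_up * \<delta> \<longrightarrow>
       \<bar>bregman_sym J (\<lambda>u. inner (f - T \<phi>) (T u) / \<alpha>) p_dag \<phi> phi_dag\<bar> \<le> C * \<Psi> \<delta>)"
proof -
  define K where "K = 1 + \<tau>_up"
  define C where "C = K * (2/\<sigma> + 1 + 2*\<tau>_up*K/(\<tau>_lo^2-1))"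
  have K1: "K \<ge> 1" using \<tau> by (simp add: K_def)
  have Tdag: "T phi_dag = f_dag" using sol by (simp add: J_min_solution_def)
  have psi_mono: "\<And>x y. 0 \<le> x \<Longrightarrow> x \<le> y \<Longrightarrow> \<Psi> x \<le> \<Psi> y"
    using \<Psi> unfolding concave_index_function_def
    by (meson atLeast_iff order_trans strict_mono_on_leD)
  have psi0: "\<Psi> 0 = 0" using \<Psi> by (simp add: concave_index_function_def)
  have psiK: "\<Psi> (K*d) \<le> K * \<Psi> d" if "d > 0" for d
  proof -
    have cc: "concave_on {0..} \<Psi>" using \<Psi> by (simp add: concave_index_function_def)
    have "(1 - 1/K) * \<Psi> 0 + (1/K) * \<Psi> (K*d) \<le> \<Psi> ((1 - 1/K) *\<^sub>R 0 + (1/K) *\<^sub>R (K*d))"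
      using concave_onD[OF cc, of "1/K" 0 "K*d"] K1 that by simp
    also have "(1 - 1/K) *\<^sub>R 0 + (1/K) *\<^sub>R (K*d) = d" using K1 by simp
    finally have "(1/K) * \<Psi> (K*d) \<le> \<Psi> d" using psi0 by simp
    then show ?thesis using K1 by (simp add: field_simps)
  qed
  show ?thesis
  proof (intro exI[of _ C] exI[of _ 1] conjI allI impI, simp)
    fix \<delta> f \<alpha> \<phi>
    assume d0: "0 < \<delta>" and "\<delta> \<le> 1" and e: "norm (f_dag - f) \<le> \<delta>" and a0: "0 < \<alpha>"
      and tik: "tikhonov_minimizer T J f \<alpha> \<phi>"
      and lo: "\<tau>_lo * \<delta> \<le> norm (T \<phi> - f)" and up: "norm (T \<phi> - f) \<le> \<tau>_up * \<delta>"
    define r where "r = norm (T \<phi> - f)"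
    define A where "A = K * \<Psi> \<delta>"
    have psid: "\<Psi> \<delta> \<ge> 0" using psi_mono[of 0 \<delta>] psi0 d0 by simp
    have A0: "A \<ge> 0" using K1 psid by (simp add: A_def)
    have m: "r^2/2 + \<alpha> * J \<phi> \<le> (norm (f_dag - f))^2/2 + \<alpha> * J phi_dag"
      using tik Tdag unfolding tikhonov_minimizer_def r_def by metis
    have e2: "(norm (f_dag - f))^2 \<le> \<delta>^2" using e by (simp add: power_mono)
    have r2: "(\<tau>_lo * \<delta>)^2 \<le> r^2" using lo d0 \<tau> by (intro power_mono) (auto simp: r_def)
    have "(\<tau>_lo^2 - 1) * \<delta>^2 \<le> 2 * \<alpha> * (J phi_dag - J \<phi>)"
      using m e2 r2 by (simp add: power_mult_distrib algebra_simps)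
    note key = this
    have tl: "\<tau>_lo^2 - 1 > 0" using one_less_power[of \<tau>_lo 2] \<tau> by simp
    have Jle: "J \<phi> \<le> J phi_dag"
    proof -
      have "0 < (\<tau>_lo^2 - 1) * \<delta>^2" using tl d0 by simp
      then have "0 < \<alpha> * (J phi_dag - J \<phi>)" using key by simp
      then show ?thesis using a0 by (simp add: zero_less_mult_iff)
    qed
    have Tdiff: "T \<phi> - T phi_dag = (T \<phi> - f) + (f - f_dag)" using Tdag by simp
    have nT: "norm (T \<phi> - T phi_dag) \<le> K * \<delta>"
    proof -
      have "norm (T \<phi> - T phi_dag) \<le> r + norm (f - f_dag)"
        unfolding Tdiff r_def by (rule norm_triangle_ineq)
      then show ?thesis using up e by (simp add: r_def K_def norm_minus_commute algebra_simps)
    qed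
    have PsiA: "\<Psi> (norm (T \<phi> - T phi_dag)) \<le> A"
      using psi_mono[OF norm_ge_zero nT] psiK[OF d0] by (simp add: A_def)
    define D1 where "D1 = bregman J p_dag \<phi> phi_dag"
    have "J phi_dag + p_dag (\<phi> - phi_dag) \<le> J \<phi>" using p_dag unfolding subdiff_def by blast
    then have D1ge: "D1 \<ge> 0" unfolding D1_def bregman_def by linarith
    have V: "\<sigma> / 2 * D1 \<le> J \<phi> - J phi_dag + \<Psi> (norm (T \<phi> - T phi_dag))"
      using VSC unfolding D1_def .
    have D1le: "D1 \<le> 2/\<sigma> * A"
    proof -
      have "\<sigma> / 2 * D1 \<le> A" using V Jle PsiA by linarith
      then show ?thesis using \<sigma> by (simp add: field_simps)
    qed
    have "\<sigma> / 2 * D1 \<ge> 0" using D1ge \<sigma> by simp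
    then have Jdiff: "J phi_dag - J \<phi> \<le> A" using V PsiA by linarith
    have da: "\<delta>^2/\<alpha> \<le> 2*A/(\<tau>_lo^2-1)"
    proof -
      have "(\<tau>_lo^2 - 1) * \<delta>^2 \<le> 2 * \<alpha> * A" 
      proof -
        have "2 * \<alpha> * (J phi_dag - J \<phi>) \<le> 2 * \<alpha> * A" using Jdiff a0 by (intro mult_left_mono) auto
        then show ?thesis using key by linarith
      qed
      then show ?thesis using tl a0 by (simp add: field_simps)
    qed
    define p where "p = (\<lambda>u. inner (f - T \<phi>) (T u) / \<alpha>)"
    define D2 where "D2 = bregman J p phi_dag \<phi>"
    have D2eq: "D2 = J phi_dag - J \<phi> - inner (f - T \<phi>) (T phi_dag - T \<phi>) / \<alpha>"
      unfolding D2_def bregman_def p_def using linear_diff[OF bounded_linear.linear[OF T_lin]] by simp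
    have tu: "\<tau>_up \<ge> 0" using \<tau> by simp
    have inn: "\<bar>inner (f - T \<phi>) (T phi_dag - T \<phi>)\<bar> \<le> \<tau>_up * \<delta> * (K * \<delta>)"
    proof -
      have "\<bar>inner (f - T \<phi>) (T phi_dag - T \<phi>)\<bar> \<le> norm (f - T \<phi>) * norm (T phi_dag - T \<phi>)"
        by (rule Cauchy_Schwarz_ineq2)
      also have "\<dots> \<le> \<tau>_up * \<delta> * (K * \<delta>)"
        using up nT tu d0 by (intro mult_mono) (auto simp: norm_minus_commute)
      finally show ?thesis .
    qed
    have inn2: "\<bar>inner (f - T \<phi>) (T phi_dag - T \<phi>) / \<alpha>\<bar> \<le> \<tau>_up * K * (2*A/(\<tau>_lo^2-1))"
    proof -
      have "\<bar>inner (f - T \<phi>) (T phi_dag - T \<phi>) / \<alpha>\<bar> \<le> \<tau>_up * K * (\<delta>^2/\<alpha>)"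
        using inn a0 by (simp add: field_simps power2_eq_square)
      also have "\<dots> \<le> \<tau>_up * K * (2*A/(\<tau>_lo^2-1))"
        using da tu K1 by (intro mult_left_mono) auto
      finally show ?thesis .
    qed
    have "\<bar>D2\<bar> \<le> A + \<tau>_up * K * (2*A/(\<tau>_lo^2-1))"
      using D2eq Jdiff Jle inn2 by linarith
    then have "\<bar>D1 + D2\<bar> \<le> 2/\<sigma> * A + A + \<tau>_up * K * (2*A/(\<tau>_lo^2-1))"
      using D1ge D1le by linarith
    also have "\<dots> = C * \<Psi> \<delta>" by (simp add: A_def C_def field_simps)
    finally show "\<bar>bregman_sym J (\<lambda>u. inner (f - T \<phi>) (T u) / \<alpha>) p_dag \<phi> phi_dag\<bar> \<le> C * \<Psi> \<delta>"
      unfolding bregman_sym_def D1_def D2_def p_def .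
  qed
qed

end
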